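(* On the algebra $\mathcal O^\star(\mathbb C)$ of analytic functionals on $\mathbb C$ (with convolution), the seminorms $\|\alpha\|_C=\sum_{k\in\mathbb N}|\alpha_k|\,C^k$, $C\ge0$, are continuous and submultiplicative, and they form a fundamental system among all continuous submultiplicative seminorms: for every continuous submultiplicative seminorm $p$ on $\mathcal O^\star(\mathbb C)$ there exist $C\ge0$ and $M>0$ with $p(\alpha)\le M\|\alpha\|_C$ for all $\alpha$.
   Context: $\mathcal O(\mathbb C)$ is the algebra of entire functions with the topology of uniform convergence on compact sets; $\mathcal O^\star(\mathbb C)$ is its dual with the topology of uniform convergence on compact subsets of $\mathcal O(\mathbb C)$. For $\alpha\in\mathcal O^\star(\mathbb C)$, $\alpha_k=\frac1{k!}\alpha(t^k)$ where $t^k(x)=x^k$, so that $\alpha=\sum_k\alpha_k\tau^k$ with $\tau^k(u)=u^{(k)}(0)$. Convolution: $(\alpha*\beta)(u)=\alpha(s\mapsto\beta(t\mapsto u(s+t)))$; in coefficients $(\alpha*\beta)_k=\sum_{i=0}^k\alpha_i\beta_{k-i}$. *)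

theory Defs
  imports "HOL-Analysis.Analysis"
begin

definition unif_family_open :: "'a set set \<Rightarrow> ('a \<Rightarrow> 'b::metric_space) set \<Rightarrow> bool" where
  "unif_family_open F U \<longleftrightarrow>
     (\<forall>f\<in>U. \<exists>K\<in>F. \<exists>e>0. {g. \<forall>x\<in>K. dist (g x) (f x) < e} \<subseteq> U)"

definition unif_family_topology :: "'a set set \<Rightarrow> ('a \<Rightarrow> 'b::metric_space) topology" where
  "unif_family_topology F = topology (unif_family_open F)"

lemma istopology_unif_family_open:
  assumes "\<And>K L. K \<in> F \<Longrightarrow> L \<in> F \<Longrightarrow> K \<union> L \<in> F"
  shows "istopology (unif_family_open F :: ('a \<Rightarrow> 'b::metric_space) set \<Rightarrow> bool)"
  unfolding istopology_def
proof (intro conjI allI impI)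
  fix S T :: "('a \<Rightarrow> 'b) set"
  assume S: "unif_family_open F S" and T: "unif_family_open F T"
  show "unif_family_open F (S \<inter> T)"
    unfolding unif_family_open_def
  proof
    fix f assume f: "f \<in> S \<inter> T"
    obtain K1 e1 where K1: "K1 \<in> F" "e1 > 0" "{g. \<forall>x\<in>K1. dist (g x) (f x) < e1} \<subseteq> S"
      using S f unfolding unif_family_open_def by blast
    obtain K2 e2 where K2: "K2 \<in> F" "e2 > 0" "{g. \<forall>x\<in>K2. dist (g x) (f x) < e2} \<subseteq> T"
      using T f unfolding unif_family_open_def by blast
    have sub: "{g. \<forall>x\<in>K1 \<union> K2. dist (g x) (f x) < min e1 e2} \<subseteq> S \<inter> T"
    proof
      fix g assume "g \<in> {g. \<forall>x\<in>K1 \<union> K2. dist (g x) (f x) < min e1 e2}"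
      then have "g \<in> {g. \<forall>x\<in>K1. dist (g x) (f x) < e1}" "g \<in> {g. \<forall>x\<in>K2. dist (g x) (f x) < e2}"
        by simp_all
      then show "g \<in> S \<inter> T" using K1(3) K2(3) by blast
    qed
    have "K1 \<union> K2 \<in> F" using K1(1) K2(1) assms by blast
    moreover have "min e1 e2 > 0" using K1(2) K2(2) by simp
    ultimately show "\<exists>K\<in>F. \<exists>e>0. {g. \<forall>x\<in>K. dist (g x) (f x) < e} \<subseteq> S \<inter> T"
      using sub by blast
  qed
next
  fix UU :: "('a \<Rightarrow> 'b) set set"
  assume "\<forall>U\<in>UU. unif_family_open F U"
  then show "unif_family_open F (\<Union>UU)"
    unfolding unif_family_open_def
  proof (intro ballI)
    fix f assume op: "\<forall>U\<in>UU. \<forall>f\<in>U. \<exists>K\<in>F. \<exists>e>0. {g. \<forall>x\<in>K. dist (g x) (f x) < e} \<subseteq> U"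
      and f: "f \<in> \<Union>UU"
    from f obtain U where U: "U \<in> UU" "f \<in> U" by (rule UnionE)
    from op U obtain L e where L: "L \<in> F" "e > 0" "{g. \<forall>x\<in>L. dist (g x) (f x) < e} \<subseteq> U"
      by meson
    have "U \<subseteq> \<Union>UU" using U(1) by (rule Union_upper)
    then show "\<exists>K\<in>F. \<exists>e>0. {g. \<forall>x\<in>K. dist (g x) (f x) < e} \<subseteq> \<Union>UU"
      using L by (meson order_trans)
  qed
qed

definition entire_fns :: "(complex \<Rightarrow> complex) set" where
  "entire_fns = {f. f holomorphic_on UNIV}"

definition OC_top :: "(complex \<Rightarrow> complex) topology" where
  "OC_top = subtopology (unif_family_topology {K. compact K}) entire_fns"

text \<open>O*(C): continuous linear functionals on O(C). A functional is represented by a map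
  on all functions complex => complex, normalised to be 0 outside entire functions.\<close>
definition analytic_functionals :: "((complex \<Rightarrow> complex) \<Rightarrow> complex) set" where
  "analytic_functionals =
     {\<alpha>. (\<forall>u v. u \<in> entire_fns \<longrightarrow> v \<in> entire_fns \<longrightarrow> \<alpha> (\<lambda>z. u z + v z) = \<alpha> u + \<alpha> v)
        \<and> (\<forall>c u. u \<in> entire_fns \<longrightarrow> \<alpha> (\<lambda>z. c * u z) = c * \<alpha> u)
        \<and> continuous_map OC_top euclidean \<alpha>
        \<and> (\<forall>u. u \<notin> entire_fns \<longrightarrow> \<alpha> u = 0)}"

definition OS_top :: "((complex \<Rightarrow> complex) \<Rightarrow> complex) topology" where
  "OS_top = subtopology (unif_family_topology {B. compactin OC_top B}) analytic_functionals"

definition aconv :: "((complex \<Rightarrow> complex) \<Rightarrow> complex) \<Rightarrow> ((complex \<Rightarrow> complex) \<Rightarrow> complex)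
    \<Rightarrow> ((complex \<Rightarrow> complex) \<Rightarrow> complex)" where
  "aconv \<alpha> \<beta> = (\<lambda>u. if u \<in> entire_fns then \<alpha> (\<lambda>s. \<beta> (\<lambda>t. u (s + t))) else 0)"

definition acoeff :: "((complex \<Rightarrow> complex) \<Rightarrow> complex) \<Rightarrow> nat \<Rightarrow> complex" where
  "acoeff \<alpha> k = \<alpha> (\<lambda>x. x ^ k) / of_nat (fact k)"

definition normC :: "real \<Rightarrow> ((complex \<Rightarrow> complex) \<Rightarrow> complex) \<Rightarrow> real" where
  "normC C \<alpha> = (\<Sum>k. norm (acoeff \<alpha> k) * C ^ k)"

definition is_seminorm_OS :: "(((complex \<Rightarrow> complex) \<Rightarrow> complex) \<Rightarrow> real) \<Rightarrow> bool" where
  "is_seminorm_OS p \<longleftrightarrow>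
     (\<forall>\<alpha>\<in>analytic_functionals. \<forall>\<beta>\<in>analytic_functionals. p (\<lambda>u. \<alpha> u + \<beta> u) \<le> p \<alpha> + p \<beta>)
     \<and> (\<forall>\<alpha>\<in>analytic_functionals. \<forall>c::complex. p (\<lambda>u. c * \<alpha> u) = norm c * p \<alpha>)"

definition submultiplicative_OS :: "(((complex \<Rightarrow> complex) \<Rightarrow> complex) \<Rightarrow> real) \<Rightarrow> bool" where
  "submultiplicative_OS p \<longleftrightarrow>
     (\<forall>\<alpha>\<in>analytic_functionals. \<forall>\<beta>\<in>analytic_functionals. p (aconv \<alpha> \<beta>) \<le> p \<alpha> * p \<beta>)"

definition continuous_OS :: "(((complex \<Rightarrow> complex) \<Rightarrow> complex) \<Rightarrow> real) \<Rightarrow> bool" where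
  "continuous_OS p \<longleftrightarrow> continuous_map OS_top euclideanreal p"

end

theory Submission
  imports Defs "HOL-Complex_Analysis.Complex_Analysis"
begin


definition ufam :: "'a set set \<Rightarrow> bool" where
  "ufam F \<longleftrightarrow> (\<forall>K L. K \<in> F \<longrightarrow> L \<in> F \<longrightarrow> K \<union> L \<in> F) \<and> F \<noteq> {}"

lemma ufam_compact: "ufam {K::'a::topological_space set. compact K}"
  unfolding ufam_def by (auto intro: compact_Un)

lemma ufam_compactin: "ufam {B. compactin X B}"
  unfolding ufam_def by (auto intro: compactin_Un)

lemma openin_uft:
  assumes "ufam F"
  shows "openin (unif_family_topology F) = (unif_family_open F :: ('a \<Rightarrow> 'b::metric_space) set \<Rightarrow> bool)"
  unfolding unif_family_topology_def
  by (rule topology_inverse', rule istopology_unif_family_open) (use assms in \<open>auto simp: ufam_def\<close>)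

lemma topspace_uft:
  assumes "ufam F"
  shows "topspace (unif_family_topology F :: ('a \<Rightarrow> 'b::metric_space) topology) = UNIV"
proof -
  obtain K where K: "K \<in> F" using assms unfolding ufam_def by blast
  have "unif_family_open F (UNIV :: ('a \<Rightarrow> 'b) set)"
    unfolding unif_family_open_def using K by (auto intro!: exI[of _ 1])
  then show ?thesis using openin_uft[OF assms] by (metis openin_subset top.extremum_unique)
qed

lemma uft_open_nbhd:
  fixes f :: "'a \<Rightarrow> 'b::metric_space"
  assumes "ufam F" "K \<in> F" "e > 0"
  shows "\<exists>N. openin (unif_family_topology F) N \<and> f \<in> N \<and> N \<subseteq> {g. \<forall>x\<in>K. dist (g x) (f x) < e}"
proof -
  define N where "N = {g. \<exists>d>0. \<forall>x\<in>K. dist (g x) (f x) < e - d}"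
  have "unif_family_open F N"
    unfolding unif_family_open_def
  proof
    fix g assume "g \<in> N"
    then obtain d where d: "d > 0" "\<forall>x\<in>K. dist (g x) (f x) < e - d" by (auto simp: N_def)
    have "{h. \<forall>x\<in>K. dist (h x) (g x) < d/2} \<subseteq> N"
    proof
      fix h assume h: "h \<in> {h. \<forall>x\<in>K. dist (h x) (g x) < d/2}"
      have "\<forall>x\<in>K. dist (h x) (f x) < e - d/2"
      proof
        fix x assume "x \<in> K"
        then have "dist (h x) (g x) < d/2" "dist (g x) (f x) < e - d" using h d by auto
        moreover have "dist (h x) (f x) \<le> dist (h x) (g x) + dist (g x) (f x)" by (rule dist_triangle)
        ultimately show "dist (h x) (f x) < e - d/2" by linarith
      qed
      then show "h \<in> N" unfolding N_def using d by (auto intro!: exI[of _ "d/2"])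
    qed
    then show "\<exists>K\<in>F. \<exists>e>0. {h. \<forall>x\<in>K. dist (h x) (g x) < e} \<subseteq> N" using assms(2) d by (auto intro!: bexI[of _ K] exI[of _ "d/2"])
  qed
  moreover have "f \<in> N" unfolding N_def using assms(3) by (auto intro!: exI[of _ "e/2"])
  moreover have "N \<subseteq> {g. \<forall>x\<in>K. dist (g x) (f x) < e}" unfolding N_def by force
  ultimately show ?thesis unfolding openin_uft[OF assms(1)] by blast
qed

lemma uft_open_basic:
  fixes f :: "'a \<Rightarrow> 'b::metric_space"
  assumes "ufam F" "openin (unif_family_topology F) U" "f \<in> U"
  shows "\<exists>K\<in>F. \<exists>e>0. {g. \<forall>x\<in>K. dist (g x) (f x) < e} \<subseteq> U"
  using assms(2,3) unfolding openin_uft[OF assms(1)] unif_family_open_def by blast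

lemma uft_cont_intro:
  fixes \<phi> :: "('a \<Rightarrow> 'b::metric_space) \<Rightarrow> 'c::metric_space"
  assumes F: "ufam F"
    and H: "\<And>f \<epsilon>. f \<in> S \<Longrightarrow> \<epsilon> > 0 \<Longrightarrow> \<exists>K\<in>F. \<exists>e>0. \<forall>g\<in>S. (\<forall>x\<in>K. dist (g x) (f x) < e) \<longrightarrow> dist (\<phi> g) (\<phi> f) < \<epsilon>"
  shows "continuous_map (subtopology (unif_family_topology F) S) euclidean \<phi>"
  unfolding continuous_map_def
proof (intro conjI allI impI)
  show "\<phi> \<in> topspace (subtopology (unif_family_topology F) S) \<rightarrow> topspace euclidean" by simp
  fix U :: "'c set" assume U: "openin euclidean U"
  show "openin (subtopology (unif_family_topology F) S) {x \<in> topspace (subtopology (unif_family_topology F) S). \<phi> x \<in> U}"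
    (is "openin ?X ?P")
  proof (subst openin_subopen, intro ballI)
    fix f assume f: "f \<in> ?P"
    then have fS: "f \<in> S" and fU: "\<phi> f \<in> U" by (auto simp: topspace_uft[OF F])
    obtain \<epsilon> where \<epsilon>: "\<epsilon> > 0" "ball (\<phi> f) \<epsilon> \<subseteq> U" using U fU by (auto simp: open_contains_ball)
    obtain K e where Ke: "K \<in> F" "e > 0" "\<forall>g\<in>S. (\<forall>x\<in>K. dist (g x) (f x) < e) \<longrightarrow> dist (\<phi> g) (\<phi> f) < \<epsilon>"
      using H[OF fS \<epsilon>(1)] by blast
    obtain N where N: "openin (unif_family_topology F) N" "f \<in> N" "N \<subseteq> {g. \<forall>x\<in>K. dist (g x) (f x) < e}"
      using uft_open_nbhd[OF F Ke(1,2)] by blast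
    have "openin ?X (N \<inter> S)" using N(1) by (auto simp: openin_subtopology)
    moreover have "N \<inter> S \<subseteq> ?P"
    proof
      fix g assume g: "g \<in> N \<inter> S"
      then have "dist (\<phi> g) (\<phi> f) < \<epsilon>" using Ke(3) N(3) by blast
      then have "\<phi> g \<in> U" using \<epsilon>(2) by (auto simp: dist_commute)
      then show "g \<in> ?P" using g by (auto simp: topspace_uft[OF F])
    qed
    ultimately show "\<exists>T. openin ?X T \<and> f \<in> T \<and> T \<subseteq> ?P" using N(2) fS by blast
  qed
qed

lemma uft_cont_elim:
  fixes \<phi> :: "('a \<Rightarrow> 'b::metric_space) \<Rightarrow> 'c::metric_space"
  assumes F: "ufam F" and C: "continuous_map (subtopology (unif_family_topology F) S) euclidean \<phi>"
    and f: "f \<in> S" and \<epsilon>: "\<epsilon> > 0"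
  shows "\<exists>K\<in>F. \<exists>e>0. \<forall>g\<in>S. (\<forall>x\<in>K. dist (g x) (f x) < e) \<longrightarrow> dist (\<phi> g) (\<phi> f) < \<epsilon>"
proof -
  have "openin (subtopology (unif_family_topology F) S) {x \<in> topspace (subtopology (unif_family_topology F) S). \<phi> x \<in> ball (\<phi> f) \<epsilon>}"
  proof -
    have "openin euclidean (ball (\<phi> f) \<epsilon>)" by simp
    then show ?thesis using C unfolding continuous_map_def by blast
  qed
  then obtain T where T: "openin (unif_family_topology F) T" "{x \<in> S. \<phi> x \<in> ball (\<phi> f) \<epsilon>} = T \<inter> S"
    by (auto simp: openin_subtopology topspace_uft[OF F])
  have "f \<in> {x \<in> S. \<phi> x \<in> ball (\<phi> f) \<epsilon>}" using f \<epsilon> by simp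
  then have "f \<in> T" using T(2) by blast
  then obtain K e where Ke: "K \<in> F" "e > 0" "{g. \<forall>x\<in>K. dist (g x) (f x) < e} \<subseteq> T"
    using uft_open_basic[OF F T(1)] by blast
  have "\<forall>g\<in>S. (\<forall>x\<in>K. dist (g x) (f x) < e) \<longrightarrow> dist (\<phi> g) (\<phi> f) < \<epsilon>"
  proof (intro ballI impI)
    fix g assume "g \<in> S" "\<forall>x\<in>K. dist (g x) (f x) < e"
    then have "g \<in> T \<inter> S" using Ke(3) by auto
    then have "\<phi> g \<in> ball (\<phi> f) \<epsilon>" using T(2) by blast
    then show "dist (\<phi> g) (\<phi> f) < \<epsilon>" by (simp add: dist_commute)
  qed
  then show ?thesis using Ke by blast
qed



abbreviation "AF \<equiv> analytic_functionals"
abbreviation "EF \<equiv> entire_fns"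

lemma EF_add[intro]: "u \<in> EF \<Longrightarrow> v \<in> EF \<Longrightarrow> (\<lambda>z. u z + v z) \<in> EF"
  by (auto simp: entire_fns_def intro!: holomorphic_intros)
lemma EF_diff[intro]: "u \<in> EF \<Longrightarrow> v \<in> EF \<Longrightarrow> (\<lambda>z. u z - v z) \<in> EF"
  by (auto simp: entire_fns_def intro!: holomorphic_intros)
lemma EF_cmult[intro]: "u \<in> EF \<Longrightarrow> (\<lambda>z. c * u z) \<in> EF"
  by (auto simp: entire_fns_def intro!: holomorphic_intros)
lemma EF_const[intro]: "(\<lambda>z. c) \<in> EF"
  by (auto simp: entire_fns_def intro!: holomorphic_intros)
lemma EF_pow[intro]: "(\<lambda>z. z ^ k) \<in> EF"
  by (auto simp: entire_fns_def intro!: holomorphic_intros)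
lemma EF_cpow[intro]: "(\<lambda>z. c * z ^ k) \<in> EF"
  by (auto simp: entire_fns_def intro!: holomorphic_intros)
lemma EF_sum[intro]: "(\<And>i. i \<in> I \<Longrightarrow> f i \<in> EF) \<Longrightarrow> (\<lambda>z. \<Sum>i\<in>I. f i z) \<in> EF"
  unfolding entire_fns_def by (auto intro!: holomorphic_intros)
lemma EF_shift[intro]:
  assumes "u \<in> EF" shows "(\<lambda>t. u (s + t)) \<in> EF"
proof -
  have h1: "(\<lambda>t. s + t) holomorphic_on UNIV" by (intro holomorphic_intros)
  have h2: "u holomorphic_on (\<lambda>t. s+t) ` UNIV" using assms by (auto simp: entire_fns_def)
  show ?thesis using holomorphic_on_compose[OF h1 h2] by (simp add: o_def entire_fns_def)
qed

lemma AF_add: "\<alpha> \<in> AF \<Longrightarrow> u \<in> EF \<Longrightarrow> v \<in> EF \<Longrightarrow> \<alpha> (\<lambda>z. u z + v z) = \<alpha> u + \<alpha> v"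
  by (simp add: analytic_functionals_def)
lemma AF_cmult: "\<alpha> \<in> AF \<Longrightarrow> u \<in> EF \<Longrightarrow> \<alpha> (\<lambda>z. c * u z) = c * \<alpha> u"
  by (simp add: analytic_functionals_def)
lemma AF_out: "\<alpha> \<in> AF \<Longrightarrow> u \<notin> EF \<Longrightarrow> \<alpha> u = 0"
  by (simp add: analytic_functionals_def)
lemma AF_cont: "\<alpha> \<in> AF \<Longrightarrow> continuous_map OC_top euclidean \<alpha>"
  by (simp add: analytic_functionals_def)

lemma AF_zero: "\<alpha> \<in> AF \<Longrightarrow> \<alpha> (\<lambda>z. 0) = 0"
  using AF_cmult[of \<alpha> "\<lambda>z. 0" 0] by auto

lemma AF_diff: "\<alpha> \<in> AF \<Longrightarrow> u \<in> EF \<Longrightarrow> v \<in> EF \<Longrightarrow> \<alpha> (\<lambda>z. u z - v z) = \<alpha> u - \<alpha> v"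
proof -
  assume a: "\<alpha> \<in> AF" "u \<in> EF" "v \<in> EF"
  have "\<alpha> (\<lambda>z. u z - v z) = \<alpha> (\<lambda>z. u z + (-1) * v z)" by simp
  also have "\<dots> = \<alpha> u + \<alpha> (\<lambda>z. (-1) * v z)"
  proof -
    have "(\<lambda>z. (-1) * v z) \<in> EF" using a(3) by (rule EF_cmult)
    then show ?thesis by (rule AF_add[OF a(1) a(2)])
  qed
  also have "\<dots> = \<alpha> u - \<alpha> v" using AF_cmult[OF a(1) a(3), of "-1"] by simp
  finally show ?thesis .
qed

lemma AF_sum:
  assumes a: "\<alpha> \<in> AF" and fin: "finite I" and f: "\<And>i. i \<in> I \<Longrightarrow> f i \<in> EF"
  shows "\<alpha> (\<lambda>z. \<Sum>i\<in>I. f i z) = (\<Sum>i\<in>I. \<alpha> (f i))"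
  using fin f
proof (induction I rule: finite_induct)
  case empty
  then show ?case using AF_zero[OF a] by simp
next
  case (insert x F)
  have "\<alpha> (\<lambda>z. \<Sum>i\<in>insert x F. f i z) = \<alpha> (\<lambda>z. f x z + (\<Sum>i\<in>F. f i z))"
    using insert(1,2) by simp
  also have "\<dots> = \<alpha> (f x) + \<alpha> (\<lambda>z. \<Sum>i\<in>F. f i z)"
    using AF_add[OF a, of "f x" "\<lambda>z. \<Sum>i\<in>F. f i z"] insert(4) by (auto intro!: EF_sum)
  also have "\<dots> = (\<Sum>i\<in>insert x F. \<alpha> (f i))" using insert by simp
  finally show ?case .
qed

lemma AF_bound:
  assumes "\<alpha> \<in> AF"
  shows "\<exists>R>0. \<exists>M>0. \<forall>u\<in>EF. \<forall>S>0. (\<forall>z\<in>cball 0 R. norm (u z) \<le> S) \<longrightarrow> norm (\<alpha> u) \<le> M * S"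
proof -
  have c: "continuous_map (subtopology (unif_family_topology {K::complex set. compact K}) EF) euclidean \<alpha>"
    using AF_cont[OF assms] by (simp add: OC_top_def)
  obtain K e where Ke: "compact K" "e > 0"
    "\<forall>g\<in>EF. (\<forall>x\<in>K. dist (g x) ((\<lambda>z. 0) x) < e) \<longrightarrow> dist (\<alpha> g) (\<alpha> (\<lambda>z. 0)) < 1"
    using uft_cont_elim[OF ufam_compact c EF_const[of 0], of 1] by auto
  obtain R where R: "R > 0" "\<forall>x\<in>K. norm x \<le> R" using compact_imp_bounded[OF Ke(1)] by (auto simp: bounded_pos)
  have "\<forall>u\<in>EF. \<forall>S>0. (\<forall>z\<in>cball 0 R. norm (u z) \<le> S) \<longrightarrow> norm (\<alpha> u) \<le> (2/e) * S"
  proof (intro ballI allI impI)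
    fix u S assume u: "u \<in> EF" and S: "(S::real) > 0" and b: "\<forall>z\<in>cball 0 R. norm (u z) \<le> S"
    define t where "t = complex_of_real (e / (2*S))"
    have nt: "norm t = e / (2*S)" unfolding t_def norm_of_real using S Ke(2) by auto
    have "\<forall>x\<in>K. dist ((\<lambda>z. t * u z) x) ((\<lambda>z. 0) x) < e"
    proof
      fix x assume "x \<in> K"
      then have "norm (u x) \<le> S" using b R by auto
      then have "norm t * norm (u x) \<le> norm t * S" by (rule mult_left_mono) simp
      also have "\<dots> = e / 2" using nt S by simp
      also have "\<dots> < e" using Ke(2) by simp
      finally show "dist ((\<lambda>z. t * u z) x) ((\<lambda>z. 0) x) < e" by (simp add: dist_norm norm_mult)
    qed
    note bx = this
    have tu: "(\<lambda>z. t * u z) \<in> EF" by (rule EF_cmult[OF u])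
    have "dist (\<alpha> (\<lambda>z. t * u z)) (\<alpha> (\<lambda>z. 0)) < 1"
      by (rule Ke(3)[rule_format, OF tu]) (use bx in simp)
    then have "norm (t * \<alpha> u) < 1" using AF_cmult[OF assms u] AF_zero[OF assms] by (simp add: dist_norm)
    then have "e / (2*S) * norm (\<alpha> u) < 1" by (simp add: norm_mult nt)
    then show "norm (\<alpha> u) \<le> (2/e) * S" using S Ke(2) by (simp add: field_simps)
  qed
  then show ?thesis using R(1) Ke(2) by (intro exI[of _ R] conjI exI[of _ "2/e"]) auto
qed

lemma AF_coeff_bound:
  assumes "\<alpha> \<in> AF"
  shows "\<exists>R>0. \<exists>M>0. \<forall>k. norm (acoeff \<alpha> k) \<le> M * R ^ k / fact k"
proof -
  obtain R M where RM: "R > 0" "M > 0" "\<forall>u\<in>EF. \<forall>S>0. (\<forall>z\<in>cball 0 R. norm (u z) \<le> S) \<longrightarrow> norm (\<alpha> u) \<le> M * S"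
    using AF_bound[OF assms] by blast
  have "norm (acoeff \<alpha> k) \<le> M * R ^ k / fact k" for k
  proof -
    have "\<forall>z::complex\<in>cball 0 R. norm (z ^ k) \<le> R ^ k"
    proof
      fix z :: complex assume "z \<in> cball 0 R"
      then have "norm z \<le> R" by simp
      then show "norm (z ^ k) \<le> R ^ k" by (simp add: norm_power power_mono)
    qed
    note zk = this
    have Rk: "R ^ k > 0" using RM(1) by simp
    have "norm (\<alpha> (\<lambda>z. z ^ k)) \<le> M * R ^ k"
      by (rule RM(3)[rule_format, OF EF_pow[of k] Rk]) (use zk in simp)
    then show ?thesis by (simp add: acoeff_def norm_divide divide_right_mono)
  qed
  then show ?thesis using RM by blast
qed

lemma summable_exp_bound:
  fixes M R D :: real
  shows "summable (\<lambda>k. M * (R * D) ^ k / fact k)"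
  using summable_mult[OF summable_exp[of "R*D"], of M] by (simp add: field_simps)

lemma AF_summable:
  assumes "\<alpha> \<in> AF" "D \<ge> 0"
  shows "summable (\<lambda>k. norm (acoeff \<alpha> k) * D ^ k)"
proof -
  obtain R M where RM: "R > 0" "M > 0" "\<forall>k. norm (acoeff \<alpha> k) \<le> M * R ^ k / fact k"
    using AF_coeff_bound[OF assms(1)] by blast
  show ?thesis
  proof (rule summable_comparison_test[OF _ summable_exp_bound[of M R D]])
    show "\<exists>N. \<forall>n\<ge>N. norm (norm (acoeff \<alpha> n) * D ^ n) \<le> M * (R * D) ^ n / fact n"
    proof (intro exI allI impI)
      fix n :: nat
      have "norm (acoeff \<alpha> n) * D ^ n \<le> M * R ^ n / fact n * D ^ n"
        using RM(3) assms(2) by (intro mult_right_mono) auto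
      then show "norm (norm (acoeff \<alpha> n) * D ^ n) \<le> M * (R * D) ^ n / fact n"
        using assms(2) by (simp add: power_mult_distrib field_simps)
    qed
  qed
qed

lemma acoeff_add: "acoeff (\<lambda>u. \<alpha> u + \<beta> u) k = acoeff \<alpha> k + acoeff \<beta> k"
  by (simp add: acoeff_def add_divide_distrib)
lemma acoeff_cmult: "acoeff (\<lambda>u. c * \<alpha> u) k = c * acoeff \<alpha> k"
  by (simp add: acoeff_def)

lemma normC_nonneg: "normC C \<alpha> \<ge> 0" if "C \<ge> 0" "\<alpha> \<in> AF"
  unfolding normC_def using that by (intro suminf_nonneg AF_summable) auto

lemma normC_seminorm:
  assumes C: "C \<ge> 0"
  shows "is_seminorm_OS (normC C)"
  unfolding is_seminorm_OS_def
proof (intro conjI ballI allI)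
  fix \<alpha> \<beta> assume a: "\<alpha> \<in> AF" "\<beta> \<in> AF"
  have sa: "summable (\<lambda>k. norm (acoeff \<alpha> k) * C ^ k)" and sb: "summable (\<lambda>k. norm (acoeff \<beta> k) * C ^ k)"
    using AF_summable a C by auto
  have le: "norm (acoeff (\<lambda>u. \<alpha> u + \<beta> u) k) * C ^ k \<le> norm (acoeff \<alpha> k) * C ^ k + norm (acoeff \<beta> k) * C ^ k" for k
    unfolding acoeff_add distrib_right[symmetric] using C by (intro mult_right_mono norm_triangle_ineq) auto
  have sab: "summable (\<lambda>k. norm (acoeff (\<lambda>u. \<alpha> u + \<beta> u) k) * C ^ k)"
    by (rule summable_comparison_test[OF _ summable_add[OF sa sb]]) (use le C in auto)
  show "normC C (\<lambda>u. \<alpha> u + \<beta> u) \<le> normC C \<alpha> + normC C \<beta>"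
    unfolding normC_def suminf_add[OF sa sb]
    by (rule suminf_le[OF le sab summable_add[OF sa sb]])
next
  fix \<alpha> c assume a: "\<alpha> \<in> AF"
  have sa: "summable (\<lambda>k. norm (acoeff \<alpha> k) * C ^ k)" using AF_summable a C by auto
  show "normC C (\<lambda>u. c * \<alpha> u) = norm c * normC C \<alpha>"
    unfolding normC_def acoeff_cmult norm_mult suminf_mult[OF sa, symmetric]
    by (simp add: mult.assoc)
qed



lemma aconv_pow:
  assumes a: "\<alpha> \<in> AF" and b: "\<beta> \<in> AF"
  shows "aconv \<alpha> \<beta> (\<lambda>x. x ^ k) = (\<Sum>i\<le>k. of_nat (k choose i) * \<beta> (\<lambda>t. t ^ (k - i)) * \<alpha> (\<lambda>s. s ^ i))"
proof -
  have inner: "\<beta> (\<lambda>t. (s + t) ^ k) = (\<Sum>i\<le>k. (of_nat (k choose i) * \<beta> (\<lambda>t. t ^ (k - i))) * s ^ i)" for s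
  proof -
    have "(\<lambda>t. (s + t) ^ k) = (\<lambda>t. \<Sum>i\<le>k. (of_nat (k choose i) * s ^ i) * t ^ (k - i))"
      by (rule ext) (simp add: binomial_ring)
    then have "\<beta> (\<lambda>t. (s + t) ^ k) = (\<Sum>i\<le>k. \<beta> (\<lambda>t. (of_nat (k choose i) * s ^ i) * t ^ (k - i)))"
      using AF_sum[OF b, of "{..k}" "\<lambda>i t. (of_nat (k choose i) * s ^ i) * t ^ (k - i)"] by auto
    also have "\<dots> = (\<Sum>i\<le>k. (of_nat (k choose i) * s ^ i) * \<beta> (\<lambda>t. t ^ (k - i)))"
      by (rule sum.cong[OF refl]) (rule AF_cmult[OF b EF_pow])
    finally show ?thesis by (simp add: algebra_simps)
  qed
  have "aconv \<alpha> \<beta> (\<lambda>x. x ^ k) = \<alpha> (\<lambda>s. \<beta> (\<lambda>t. (s + t) ^ k))"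
    using EF_pow[of k] by (simp add: aconv_def)
  also have "\<dots> = \<alpha> (\<lambda>s. \<Sum>i\<le>k. (of_nat (k choose i) * \<beta> (\<lambda>t. t ^ (k - i))) * s ^ i)"
    by (simp only: inner)
  also have "\<dots> = (\<Sum>i\<le>k. \<alpha> (\<lambda>s. (of_nat (k choose i) * \<beta> (\<lambda>t. t ^ (k - i))) * s ^ i))"
    using AF_sum[OF a, of "{..k}" "\<lambda>i s. (of_nat (k choose i) * \<beta> (\<lambda>t. t ^ (k - i))) * s ^ i"] by auto
  also have "\<dots> = (\<Sum>i\<le>k. (of_nat (k choose i) * \<beta> (\<lambda>t. t ^ (k - i))) * \<alpha> (\<lambda>s. s ^ i))"
    by (rule sum.cong[OF refl]) (rule AF_cmult[OF a EF_pow])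
  finally show ?thesis .
qed

lemma acoeff_aconv:
  assumes a: "\<alpha> \<in> AF" and b: "\<beta> \<in> AF"
  shows "acoeff (aconv \<alpha> \<beta>) k = (\<Sum>i\<le>k. acoeff \<alpha> i * acoeff \<beta> (k - i))"
proof -
  have "acoeff (aconv \<alpha> \<beta>) k = (\<Sum>i\<le>k. of_nat (k choose i) * \<beta> (\<lambda>t. t ^ (k - i)) * \<alpha> (\<lambda>s. s ^ i)) / fact k"
    by (simp add: acoeff_def aconv_pow[OF a b])
  also have "\<dots> = (\<Sum>i\<le>k. of_nat (k choose i) * \<beta> (\<lambda>t. t ^ (k - i)) * \<alpha> (\<lambda>s. s ^ i) / fact k)"
    by (simp add: sum_divide_distrib)
  also have "\<dots> = (\<Sum>i\<le>k. acoeff \<alpha> i * acoeff \<beta> (k - i))"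
  proof (rule sum.cong[OF refl])
    fix i assume "i \<in> {..k}"
    then have ik: "i \<le> k" by simp
    have "(of_nat (k choose i) :: complex) = fact k / (fact i * fact (k - i))" by (rule binomial_fact[OF ik])
    then show "of_nat (k choose i) * \<beta> (\<lambda>t. t ^ (k - i)) * \<alpha> (\<lambda>s. s ^ i) / fact k = acoeff \<alpha> i * acoeff \<beta> (k - i)"
      by (simp add: acoeff_def field_simps)
  qed
  finally show ?thesis .
qed

lemma normC_submult:
  assumes C: "C \<ge> 0"
  shows "submultiplicative_OS (normC C)"
  unfolding submultiplicative_OS_def
proof (intro ballI)
  fix \<alpha> \<beta> assume a: "\<alpha> \<in> AF" and b: "\<beta> \<in> AF"
  define x where "x k = norm (acoeff \<alpha> k) * C ^ k" for k
  define y where "y k = norm (acoeff \<beta> k) * C ^ k" for k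
  have sx: "summable x" and sy: "summable y" unfolding x_def y_def using AF_summable a b C by auto
  have nx: "norm (x k) = x k" and ny: "norm (y k) = y k" for k unfolding x_def y_def using C by auto
  have snx: "summable (\<lambda>k. norm (x k))" and sny: "summable (\<lambda>k. norm (y k))" using sx sy nx ny by auto
  have le: "norm (acoeff (aconv \<alpha> \<beta>) k) * C ^ k \<le> (\<Sum>i\<le>k. x i * y (k - i))" for k
  proof -
    have "norm (acoeff (aconv \<alpha> \<beta>) k) \<le> (\<Sum>i\<le>k. norm (acoeff \<alpha> i) * norm (acoeff \<beta> (k - i)))"
      unfolding acoeff_aconv[OF a b] by (rule order_trans[OF norm_sum]) (simp add: norm_mult)
    then have "norm (acoeff (aconv \<alpha> \<beta>) k) * C ^ k \<le> (\<Sum>i\<le>k. norm (acoeff \<alpha> i) * norm (acoeff \<beta> (k - i))) * C ^ k"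
      using C by (intro mult_right_mono) auto
    also have "\<dots> = (\<Sum>i\<le>k. x i * y (k - i))"
      unfolding sum_distrib_right
    proof (rule sum.cong[OF refl])
      fix i assume "i \<in> {..k}"
      then have "C ^ k = C ^ i * C ^ (k - i)" by (simp add: power_add[symmetric])
      then show "norm (acoeff \<alpha> i) * norm (acoeff \<beta> (k - i)) * C ^ k = x i * y (k - i)"
        by (simp add: x_def y_def)
    qed
    finally show ?thesis .
  qed
  have sc: "summable (\<lambda>k. \<Sum>i\<le>k. x i * y (k - i))" by (rule summable_Cauchy_product[OF snx sny])
  have sl: "summable (\<lambda>k. norm (acoeff (aconv \<alpha> \<beta>) k) * C ^ k)"
    by (rule summable_comparison_test[OF _ sc]) (use le C in auto)
  have "normC C (aconv \<alpha> \<beta>) \<le> (\<Sum>k. \<Sum>i\<le>k. x i * y (k - i))"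
    unfolding normC_def by (rule suminf_le[OF le sl sc])
  also have "\<dots> = suminf x * suminf y" by (rule Cauchy_product[OF snx sny, symmetric])
  also have "\<dots> = normC C \<alpha> * normC C \<beta>" unfolding normC_def x_def y_def ..
  finally show "normC C (aconv \<alpha> \<beta>) \<le> normC C \<alpha> * normC C \<beta>" .
qed



definition vseq :: "real \<Rightarrow> nat \<Rightarrow> complex \<Rightarrow> complex" where
  "vseq C k = (\<lambda>z. (of_real (2*C)) ^ k / fact k * z ^ k)"

lemma vseq_EF: "vseq C k \<in> EF"
  unfolding vseq_def by (rule EF_cpow)

lemma vseq_limit:
  assumes C: "C \<ge> 0"
  shows "limitin (unif_family_topology {K::complex set. compact K}) (vseq C) (\<lambda>z. 0) sequentially"
  unfolding limitin_def
proof (intro conjI allI impI)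
  show "(\<lambda>z. 0) \<in> topspace (unif_family_topology {K::complex set. compact K})"
    by (simp add: topspace_uft[OF ufam_compact])
  fix U :: "(complex \<Rightarrow> complex) set" assume U: "openin (unif_family_topology {K::complex set. compact K}) U \<and> (\<lambda>z. 0) \<in> U"
  have U1: "openin (unif_family_topology {K::complex set. compact K}) U" and U2: "(\<lambda>z. 0) \<in> U" using U by auto
  obtain K e where Ke0: "K \<in> {K. compact K}" "e > 0" "{g. \<forall>x\<in>K. dist (g x) ((\<lambda>z::complex. 0::complex) x) < e} \<subseteq> U"
    using uft_open_basic[OF ufam_compact U1 U2] by blast
  have Ke: "compact K" "e > 0" "{g. \<forall>x\<in>K. dist (g x) ((\<lambda>z::complex. 0::complex) x) < e} \<subseteq> U"
    using Ke0 by auto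
  obtain R where R: "R > 0" "\<forall>x\<in>K. norm x \<le> R" using compact_imp_bounded[OF Ke(1)] by (auto simp: bounded_pos)
  define w where "w k = inverse (fact k) * (2*C*R) ^ k" for k
  have "w \<longlonglongrightarrow> 0" unfolding w_def by (rule summable_LIMSEQ_zero[OF summable_exp])
  then have ev: "eventually (\<lambda>k. w k < e) sequentially" using Ke(2) by (rule order_tendstoD)
  show "eventually (\<lambda>k. vseq C k \<in> U) sequentially"
  proof (rule eventually_mono[OF ev])
    fix k assume wk: "w k < e"
    have "\<forall>x\<in>K. dist (vseq C k x) 0 < e"
    proof
      fix x assume "x \<in> K"
      then have nx: "norm x \<le> R" using R by auto
      have "dist (vseq C k x) 0 = (2*C) ^ k / fact k * norm x ^ k"
        using C by (simp add: vseq_def norm_mult norm_divide norm_power)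
      also have "\<dots> \<le> (2*C) ^ k / fact k * R ^ k"
        using nx C by (intro mult_left_mono power_mono) auto
      also have "\<dots> = w k" by (simp add: w_def power_mult_distrib field_simps)
      finally show "dist (vseq C k x) 0 < e" using wk by simp
    qed
    then show "vseq C k \<in> U" using Ke(3) by auto
  qed
qed

lemma vseq_compact:
  assumes C: "C \<ge> 0"
  shows "compactin OC_top (insert (\<lambda>z. 0) (range (vseq C)))"
  unfolding OC_top_def compactin_subtopology
proof
  show "compactin (unif_family_topology {K. compact K}) (insert (\<lambda>z. 0) (range (vseq C)))"
    by (rule compactin_sequence_with_limit[OF vseq_limit[OF C]]) (auto simp: topspace_uft[OF ufam_compact])
  show "insert (\<lambda>z. 0) (range (vseq C)) \<subseteq> EF" using vseq_EF by auto
qed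

lemma normC_cont:
  assumes C: "C \<ge> 0"
  shows "continuous_OS (normC C)"
  unfolding continuous_OS_def OS_top_def
proof (rule uft_cont_intro[OF ufam_compactin])
  fix \<alpha> :: "(complex \<Rightarrow> complex) \<Rightarrow> complex" and \<epsilon> :: real
  assume a: "\<alpha> \<in> AF" and \<epsilon>: "\<epsilon> > 0"
  define B where "B = insert (\<lambda>z. 0) (range (vseq C))"
  define e where "e = \<epsilon> / 4"
  have "\<forall>\<beta>\<in>AF. (\<forall>u\<in>B. dist (\<beta> u) (\<alpha> u) < e) \<longrightarrow> dist (normC C \<beta>) (normC C \<alpha>) < \<epsilon>"
  proof (intro ballI impI)
    fix \<beta> assume b: "\<beta> \<in> AF" and close: "\<forall>u\<in>B. dist (\<beta> u) (\<alpha> u) < e"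
    define d where "d k = norm (acoeff \<beta> k) * C ^ k - norm (acoeff \<alpha> k) * C ^ k" for k
    have bnd: "\<bar>d k\<bar> \<le> e * (1/2) ^ k" for k
    proof -
      have dd: "dist (\<beta> (vseq C k)) (\<alpha> (vseq C k)) < e" using close by (auto simp: B_def)
      have hb: "\<beta> (vseq C k) = (of_real (2*C)) ^ k / fact k * \<beta> (\<lambda>z. z ^ k)"
        unfolding vseq_def by (rule AF_cmult[OF b EF_pow])
      have ha: "\<alpha> (vseq C k) = (of_real (2*C)) ^ k / fact k * \<alpha> (\<lambda>z. z ^ k)"
        unfolding vseq_def by (rule AF_cmult[OF a EF_pow])
      have "\<beta> (vseq C k) - \<alpha> (vseq C k) = (of_real (2*C)) ^ k / fact k * (\<beta> (\<lambda>z. z ^ k) - \<alpha> (\<lambda>z. z ^ k))"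
        by (simp only: hb ha right_diff_distrib)
      then have "norm ((of_real (2*C)) ^ k / fact k * (\<beta> (\<lambda>z. z ^ k) - \<alpha> (\<lambda>z. z ^ k))) < e"
        using dd by (simp only: dist_norm)
      then have lt: "(2*C) ^ k / fact k * norm (\<beta> (\<lambda>z. z ^ k) - \<alpha> (\<lambda>z. z ^ k)) < e"
        using C by (simp add: norm_mult norm_divide norm_power)
      have "\<bar>d k\<bar> = \<bar>norm (acoeff \<beta> k) - norm (acoeff \<alpha> k)\<bar> * C ^ k"
        using C by (simp add: d_def left_diff_distrib[symmetric] abs_mult)
      also have "\<dots> \<le> norm (acoeff \<beta> k - acoeff \<alpha> k) * C ^ k"
        using C by (intro mult_right_mono norm_triangle_ineq3) auto
      also have "\<dots> = ((2*C) ^ k / fact k * norm (\<beta> (\<lambda>z. z ^ k) - \<alpha> (\<lambda>z. z ^ k))) * (1/2) ^ k"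
        by (simp add: acoeff_def diff_divide_distrib[symmetric] norm_divide power_mult_distrib field_simps)
      also have "\<dots> \<le> e * (1/2) ^ k" using lt by (intro mult_right_mono) auto
      finally show ?thesis .
    qed
    have sg: "summable (\<lambda>k. e * (1/2::real) ^ k)" by (intro summable_mult summable_geometric) simp
    have sad: "summable (\<lambda>k. \<bar>d k\<bar>)" by (rule summable_comparison_test[OF _ sg]) (use bnd in auto)
    have sa: "summable (\<lambda>k. norm (acoeff \<alpha> k) * C ^ k)" and sb: "summable (\<lambda>k. norm (acoeff \<beta> k) * C ^ k)"
      using AF_summable a b C by auto
    have "normC C \<beta> - normC C \<alpha> = suminf d"
      unfolding normC_def d_def by (rule suminf_diff[OF sb sa])
    then have "dist (normC C \<beta>) (normC C \<alpha>) = \<bar>suminf d\<bar>" by (simp add: dist_real_def)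
    also have "\<dots> \<le> (\<Sum>k. \<bar>d k\<bar>)" by (rule summable_rabs[OF sad])
    also have "\<dots> \<le> (\<Sum>k. e * (1/2::real) ^ k)" by (rule suminf_le[OF bnd sad sg])
    also have "\<dots> = 2 * e" using suminf_mult[OF summable_geometric[of "1/2::real"], of e] suminf_geometric[of "1/2::real"]
      by simp
    also have "\<dots> < \<epsilon>" using \<epsilon> by (simp add: e_def)
    finally show "dist (normC C \<beta>) (normC C \<alpha>) < \<epsilon>" .
  qed
  moreover have "B \<in> {B. compactin OC_top B}" using vseq_compact[OF C] by (simp add: B_def)
  moreover have "e > 0" using \<epsilon> by (simp add: e_def)
  ultimately show "\<exists>K\<in>{B. compactin OC_top B}. \<exists>e>0. \<forall>g\<in>AF. (\<forall>x\<in>K. dist (g x) (\<alpha> x) < e) \<longrightarrow> dist (normC C g) (normC C \<alpha>) < \<epsilon>"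
    by blast
qed

lemma part1: "C \<ge> 0 \<Longrightarrow> is_seminorm_OS (normC C) \<and> continuous_OS (normC C) \<and> submultiplicative_OS (normC C)"
  using normC_seminorm normC_cont normC_submult by blast



definition tau :: "nat \<Rightarrow> (complex \<Rightarrow> complex) \<Rightarrow> complex" where
  "tau k = (\<lambda>u. if u \<in> EF then (deriv ^^ k) u 0 else 0)"

lemma EF_hol: "u \<in> EF \<Longrightarrow> u holomorphic_on S"
  unfolding entire_fns_def using holomorphic_on_subset by blast

lemma cm_cmult: "continuous_map X euclidean f \<Longrightarrow> continuous_map X euclidean (\<lambda>x. (c::complex) * f x)"
  by (simp add: continuous_map_atin tendsto_mult_left)

lemma tau_AF: "tau k \<in> AF"
  unfolding analytic_functionals_def
proof (intro CollectI conjI allI impI)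
  fix u v assume u: "u \<in> EF" and v: "v \<in> EF"
  show "tau k (\<lambda>z. u z + v z) = tau k u + tau k v"
    using u v EF_add[OF u v] higher_deriv_add[of u UNIV v 0 k] by (simp add: tau_def EF_hol)
next
  fix c u assume u: "u \<in> EF"
  show "tau k (\<lambda>z. c * u z) = c * tau k u"
    using u EF_cmult[OF u, of c] higher_deriv_cmult[of u UNIV 0 k c] by (simp add: tau_def EF_hol)
next
  fix u assume "u \<notin> EF" then show "tau k u = 0" by (simp add: tau_def)
next
  show "continuous_map OC_top euclidean (tau k)"
    unfolding OC_top_def
  proof (rule uft_cont_intro[OF ufam_compact])
    fix u :: "complex \<Rightarrow> complex" and \<epsilon> :: real assume u: "u \<in> EF" and \<epsilon>: "\<epsilon> > 0"
    define e where "e = \<epsilon> / (2 * fact k)"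
    have e: "e > 0" using \<epsilon> by (simp add: e_def)
    have "\<forall>g\<in>EF. (\<forall>x\<in>cball 0 1. dist (g x) (u x) < e) \<longrightarrow> dist (tau k g) (tau k u) < \<epsilon>"
    proof (intro ballI impI)
      fix g assume g: "g \<in> EF" and close: "\<forall>x\<in>cball 0 1. dist (g x) (u x) < e"
      have "tau k g - tau k u = (deriv ^^ k) (\<lambda>z. g z - u z) 0"
        using g u higher_deriv_diff[of g UNIV u 0 k] by (simp add: tau_def EF_hol)
      moreover have "norm ((deriv ^^ k) (\<lambda>z. g z - u z) 0) \<le> fact k * e / 1 ^ k"
      proof (rule Cauchy_inequality)
        show "(\<lambda>z. g z - u z) holomorphic_on ball 0 1" using EF_diff[OF g u] by (rule EF_hol)
        show "continuous_on (cball 0 1) (\<lambda>z. g z - u z)"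
          using EF_diff[OF g u] by (intro holomorphic_on_imp_continuous_on EF_hol)
        show "(0::real) < 1" by simp
        fix x :: complex assume "norm (0 - x) = 1"
        then have "x \<in> cball 0 1" by simp
        then show "norm (g x - u x) \<le> e" using close by (auto simp: dist_norm less_imp_le)
      qed
      ultimately have "dist (tau k g) (tau k u) \<le> fact k * e" by (simp add: dist_norm)
      also have "\<dots> < \<epsilon>" using \<epsilon> by (simp add: e_def)
      finally show "dist (tau k g) (tau k u) < \<epsilon>" .
    qed
    then show "\<exists>K\<in>{K. compact K}. \<exists>e>0. \<forall>g\<in>EF. (\<forall>x\<in>K. dist (g x) (u x) < e) \<longrightarrow> dist (tau k g) (tau k u) < \<epsilon>"
      using e by (intro bexI[of _ "cball 0 1"]) auto
  qed
qed

lemma deriv_shift: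
  assumes u: "u \<in> EF"
  shows "(deriv ^^ k) (\<lambda>t. u (s + t)) = (\<lambda>t. (deriv ^^ k) u (s + t))"
proof (induction k)
  case 0
  then show ?case by simp
next
  case (Suc k)
  define h where "h = (deriv ^^ k) u"
  have hh: "h holomorphic_on UNIV" unfolding h_def using u
    by (intro holomorphic_higher_deriv) (auto simp: entire_fns_def)
  have "(deriv ^^ Suc k) (\<lambda>t. u (s + t)) = deriv (\<lambda>t. h (s + t))"
    using Suc by (simp add: h_def)
  also have "\<dots> = (\<lambda>t. deriv h (s + t))"
  proof
    fix t
    have d1: "(h has_field_derivative deriv h (s + t)) (at (s + t))"
      by (rule holomorphic_derivI[OF hh]) auto
    have d2: "((\<lambda>t. s + t) has_field_derivative 1) (at t)"
      by (auto intro!: derivative_eq_intros)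
    have "((\<lambda>t. h (s + t)) has_field_derivative deriv h (s + t) * 1) (at t)"
      by (rule DERIV_chain2[OF d1 d2])
    then show "deriv (\<lambda>t. h (s + t)) t = deriv h (s + t)" by (simp add: DERIV_imp_deriv)
  qed
  also have "\<dots> = (\<lambda>t. (deriv ^^ Suc k) u (s + t))" by (simp add: h_def)
  finally show ?case .
qed

lemma aconv_tau: "aconv (tau 1) (tau k) = tau (Suc k)"
proof
  fix u :: "complex \<Rightarrow> complex"
  show "aconv (tau 1) (tau k) u = tau (Suc k) u"
  proof (cases "u \<in> EF")
    case True
    have "(\<lambda>s. tau k (\<lambda>t. u (s + t))) = (deriv ^^ k) u"
    proof
      fix s
      show "tau k (\<lambda>t. u (s + t)) = (deriv ^^ k) u s"
        using EF_shift[OF True, of s] deriv_shift[OF True, of k s] by (simp add: tau_def)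
    qed
    moreover have "(deriv ^^ k) u \<in> EF" using True
      by (auto simp: entire_fns_def intro!: holomorphic_higher_deriv)
    ultimately show ?thesis using True by (simp add: aconv_def tau_def)
  next
    case False
    then show ?thesis by (simp add: aconv_def tau_def)
  qed
qed

lemma AF_addI: "\<alpha> \<in> AF \<Longrightarrow> \<beta> \<in> AF \<Longrightarrow> (\<lambda>u. \<alpha> u + \<beta> u) \<in> AF"
  unfolding analytic_functionals_def by (auto intro: continuous_map_add simp: distrib_left)

lemma AF_cmultI: "\<alpha> \<in> AF \<Longrightarrow> (\<lambda>u. c * \<alpha> u) \<in> AF"
  unfolding analytic_functionals_def by (auto intro: cm_cmult simp: distrib_left mult.left_commute)

lemma AF_zeroI: "(\<lambda>u. 0) \<in> AF"
  using AF_cmultI[OF tau_AF[of 0], of 0] by simp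

lemma AF_psum: "(\<lambda>u. \<Sum>k<n. a k * tau k u) \<in> AF"
proof (induction n)
  case 0
  then show ?case using AF_zeroI by simp
next
  case (Suc n)
  have "(\<lambda>u. (\<Sum>k<n. a k * tau k u) + a n * tau n u) \<in> AF"
    by (rule AF_addI[OF Suc AF_cmultI[OF tau_AF]])
  then show ?case by simp
qed



lemma compact_bound:
  assumes B: "compactin OC_top B" and K: "compact K"
  shows "\<exists>S>0. \<forall>u\<in>B. \<forall>z\<in>K. norm (u z) \<le> S"
proof -
  let ?X = "unif_family_topology {K::complex set. compact K} :: (complex \<Rightarrow> complex) topology"
  have cB: "compactin ?X B" and BE: "B \<subseteq> EF" using B by (auto simp: OC_top_def compactin_subtopology)
  have "\<forall>u. \<exists>N. openin ?X N \<and> u \<in> N \<and> N \<subseteq> {g. \<forall>x\<in>K. dist (g x) (u x) < 1}"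
    using uft_open_nbhd[OF ufam_compact, of K 1] K by auto
  then obtain N where N: "\<And>u. openin ?X (N u)" "\<And>u. u \<in> N u" "\<And>u. N u \<subseteq> {g. \<forall>x\<in>K. dist (g x) (u x) < 1}"
    using choice[of "\<lambda>u N. openin ?X N \<and> u \<in> N \<and> N \<subseteq> {g. \<forall>x\<in>K. dist (g x) (u x) < 1}"] by blast
  have "\<forall>U\<in>N ` B. openin ?X U" using N(1) by blast
  moreover have "B \<subseteq> \<Union>(N ` B)" using N(2) by blast
  ultimately obtain F where F: "finite F" "F \<subseteq> N ` B" "B \<subseteq> \<Union>F"
    using cB unfolding compactin_def by meson
  obtain B' where B': "B' \<subseteq> B" "finite B'" "F = N ` B'" using finite_subset_image[OF F(1,2)] by blast
  have "\<forall>u. \<exists>b. u \<in> EF \<longrightarrow> b > 0 \<and> (\<forall>z\<in>K. norm (u z) \<le> b)"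
  proof
    fix u
    show "\<exists>b. u \<in> EF \<longrightarrow> b > 0 \<and> (\<forall>z\<in>K. norm (u z) \<le> b)"
    proof (cases "u \<in> EF")
      case True
      have "continuous_on K u" using True by (intro holomorphic_on_imp_continuous_on EF_hol)
      then have "compact (u ` K)" using K by (rule compact_continuous_image)
      then have "bounded (u ` K)" by (rule compact_imp_bounded)
      then obtain b where "b > 0" "\<forall>y\<in>u ` K. norm y \<le> b" by (auto simp: bounded_pos)
      then show ?thesis by auto
    qed auto
  qed
  then obtain b where b: "\<And>u. u \<in> EF \<Longrightarrow> b u > 0 \<and> (\<forall>z\<in>K. norm (u z) \<le> b u)"
    using choice[of "\<lambda>u b. u \<in> EF \<longrightarrow> b > 0 \<and> (\<forall>z\<in>K. norm (u z) \<le> b)"] by blast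
  define S where "S = 1 + (\<Sum>u'\<in>B'. b u')"
  have bpos: "\<forall>u'\<in>B'. 0 \<le> b u'" using b B'(1) BE by (auto intro: less_imp_le)
  have "\<forall>u\<in>B. \<forall>z\<in>K. norm (u z) \<le> S"
  proof (intro ballI)
    fix u z assume u: "u \<in> B" and z: "z \<in> K"
    obtain u' where u': "u' \<in> B'" "u \<in> N u'" using u F(3) B'(3) by blast
    have "dist (u z) (u' z) < 1" using N(3)[of u'] u'(2) z by blast
    moreover have "norm (u' z) \<le> b u'" using b[of u'] u'(1) B'(1) BE z by auto
    moreover have "b u' \<le> (\<Sum>u'\<in>B'. b u')"
      by (rule member_le_sum[OF u'(1)]) (use bpos B'(2) in auto)
    moreover have "norm (u z) \<le> norm (u' z) + dist (u z) (u' z)"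
      by (simp add: dist_norm norm_triangle_sub)
    ultimately show "norm (u z) \<le> S" unfolding S_def by linarith
  qed
  moreover have "S > 0" using bpos unfolding S_def by (simp add: sum_nonneg add_pos_nonneg)
  ultimately show ?thesis by blast
qed

lemma taylor_tail:
  assumes u: "u \<in> EF" and R: "R > 0" and SB: "\<forall>z\<in>cball 0 (2*R). norm (u z) \<le> S"
    and z: "norm z \<le> R"
  shows "norm (u z - (\<Sum>k<n. (deriv ^^ k) u 0 / fact k * z ^ k)) \<le> 2 * S * (1/2) ^ n"
proof -
  define f where "f = (\<lambda>k. (deriv ^^ k) u 0 / fact k * z ^ k)"
  have "(\<lambda>k. (deriv ^^ k) u 0 / fact k * (z - 0) ^ k) sums u z"
    by (rule holomorphic_power_series[where r = "2*R+1"]) (use u z R in \<open>auto intro: EF_hol\<close>)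
  then have fs: "f sums u z" by (simp only: f_def diff_zero)
  have cauchy: "norm ((deriv ^^ k) u 0) \<le> fact k * S / (2*R) ^ k" for k
  proof (rule Cauchy_inequality)
    show "u holomorphic_on ball 0 (2*R)" using u by (rule EF_hol)
    show "continuous_on (cball 0 (2*R)) u" using u by (intro holomorphic_on_imp_continuous_on EF_hol)
    show "0 < 2*R" using R by simp
    fix x :: complex assume "norm (0 - x) = 2*R"
    then show "norm (u x) \<le> S" using SB by auto
  qed
  have S0: "S \<ge> 0"
  proof -
    have "norm (u 0) \<le> S" using SB R by auto
    then show ?thesis by (meson norm_ge_zero order_trans)
  qed
  have nf: "norm (f k) \<le> S * (1/2) ^ k" for k
  proof -
    have "norm (f k) = norm ((deriv ^^ k) u 0) / fact k * norm z ^ k"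
      by (simp add: f_def norm_mult norm_divide norm_power)
    also have "\<dots> \<le> (fact k * S / (2*R) ^ k) / fact k * R ^ k"
      using cauchy[of k] z S0 R by (intro mult_mono divide_right_mono power_mono) auto
    also have "\<dots> = S * (1/2) ^ k" using R by (simp add: field_simps power_mult_distrib)
    finally show ?thesis .
  qed
  have sg: "summable (\<lambda>j. S * (1/2::real) ^ (j + n))"
    by (intro summable_mult summable_ignore_initial_segment summable_geometric) simp
  have snf: "summable (\<lambda>j. norm (f (j + n)))"
    by (rule summable_comparison_test[OF _ sg]) (use nf in auto)
  have "u z = (\<Sum>j. f (j + n)) + (\<Sum>i<n. f i)"
    using suminf_split_initial_segment[OF sums_summable[OF fs], of n] sums_unique[OF fs] by simp
  then have "u z - (\<Sum>k<n. f k) = (\<Sum>j. f (j + n))" by simp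
  then have "norm (u z - (\<Sum>k<n. f k)) \<le> (\<Sum>j. norm (f (j + n)))" using summable_norm[OF snf] by simp
  also have "\<dots> \<le> (\<Sum>j. S * (1/2::real) ^ (j + n))" by (rule suminf_le[OF _ snf sg]) (use nf in auto)
  also have "\<dots> = S * (1/2) ^ n * (\<Sum>j. (1/2::real) ^ j)"
    using suminf_mult[OF summable_geometric[of "1/2::real"], of "S * (1/2)^n"]
    by (simp add: power_add mult.assoc mult.commute mult.left_commute)
  also have "\<dots> = 2 * S * (1/2) ^ n" using suminf_geometric[of "1/2::real"] by simp
  finally show ?thesis by (simp add: f_def)
qed

lemma approx:
  assumes a: "\<alpha> \<in> AF" and B: "compactin OC_top B" and e: "e > 0"
  shows "\<exists>n. \<forall>u\<in>B. norm (\<alpha> u - (\<Sum>k<n. acoeff \<alpha> k * tau k u)) < e"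
proof -
  obtain R M where RM: "R > 0" "M > 0" "\<forall>u\<in>EF. \<forall>S>0. (\<forall>z\<in>cball 0 R. norm (u z) \<le> S) \<longrightarrow> norm (\<alpha> u) \<le> M * S"
    using AF_bound[OF a] by blast
  obtain SB where SB: "SB > 0" "\<forall>u\<in>B. \<forall>z\<in>cball 0 (2*R). norm (u z) \<le> SB"
    using compact_bound[OF B compact_cball] by blast
  have BE: "B \<subseteq> EF" using B by (auto simp: OC_top_def compactin_subtopology)
  obtain n where n: "(1/2::real) ^ n < e / (2 * M * SB)"
    using real_arch_pow_inv[of "e / (2 * M * SB)" "1/2"] e RM(2) SB(1) by auto
  have "\<forall>u\<in>B. norm (\<alpha> u - (\<Sum>k<n. acoeff \<alpha> k * tau k u)) < e"
  proof
    fix u assume uB: "u \<in> B"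
    then have u: "u \<in> EF" using BE by auto
    define g where "g = (\<lambda>z. u z - (\<Sum>k<n. (deriv ^^ k) u 0 / fact k * z ^ k))"
    have gE: "g \<in> EF" unfolding g_def by (intro EF_diff[OF u] EF_sum EF_cpow)
    have "\<alpha> g = \<alpha> u - \<alpha> (\<lambda>z. \<Sum>k<n. (deriv ^^ k) u 0 / fact k * z ^ k)"
      unfolding g_def by (rule AF_diff[OF a u]) (intro EF_sum EF_cpow)
    also have "\<alpha> (\<lambda>z. \<Sum>k<n. (deriv ^^ k) u 0 / fact k * z ^ k) = (\<Sum>k<n. \<alpha> (\<lambda>z. (deriv ^^ k) u 0 / fact k * z ^ k))"
      by (rule AF_sum[OF a], simp, rule EF_cpow)
    also have "\<dots> = (\<Sum>k<n. acoeff \<alpha> k * tau k u)"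
    proof (rule sum.cong[OF refl])
      fix k
      have "\<alpha> (\<lambda>z. (deriv ^^ k) u 0 / fact k * z ^ k) = (deriv ^^ k) u 0 / fact k * \<alpha> (\<lambda>z. z ^ k)"
        by (rule AF_cmult[OF a EF_pow])
      then show "\<alpha> (\<lambda>z. (deriv ^^ k) u 0 / fact k * z ^ k) = acoeff \<alpha> k * tau k u"
        using u by (simp add: acoeff_def tau_def)
    qed
    finally have ag: "\<alpha> g = \<alpha> u - (\<Sum>k<n. acoeff \<alpha> k * tau k u)" .
    have gb: "\<forall>z\<in>cball 0 R. norm (g z) \<le> 2 * SB * (1/2) ^ n"
    proof
      fix z :: complex assume "z \<in> cball 0 R"
      then have nz: "norm z \<le> R" by simp
      show "norm (g z) \<le> 2 * SB * (1/2) ^ n"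
        unfolding g_def by (rule taylor_tail[OF u RM(1) _ nz]) (use SB(2) uB in auto)
    qed
    have "2 * SB * (1/2::real) ^ n > 0" using SB(1) by simp
    then have "norm (\<alpha> g) \<le> M * (2 * SB * (1/2) ^ n)" using RM(3) gE gb by blast
    also have "\<dots> < M * (2 * SB * (e / (2 * M * SB)))"
      using n RM(2) SB(1) by (intro mult_strict_left_mono) auto
    also have "\<dots> = e" using RM(2) SB(1) by (simp add: field_simps)
    finally show "norm (\<alpha> u - (\<Sum>k<n. acoeff \<alpha> k * tau k u)) < e" using ag by simp
  qed
  then show ?thesis by blast
qed



lemma part2:
  assumes sn: "is_seminorm_OS p" and ct: "continuous_OS p" and sm: "submultiplicative_OS p"
  shows "\<exists>C::real. C \<ge> 0 \<and> (\<exists>M::real. M > 0 \<and> (\<forall>\<alpha>\<in>analytic_functionals. p \<alpha> \<le> M * normC C \<alpha>))"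
proof -
  have tri: "\<And>\<alpha> \<beta>. \<alpha> \<in> AF \<Longrightarrow> \<beta> \<in> AF \<Longrightarrow> p (\<lambda>u. \<alpha> u + \<beta> u) \<le> p \<alpha> + p \<beta>"
    and hom: "\<And>\<alpha> c. \<alpha> \<in> AF \<Longrightarrow> p (\<lambda>u. c * \<alpha> u) = norm c * p \<alpha>"
    using sn unfolding is_seminorm_OS_def by auto
  have smul: "\<And>\<alpha> \<beta>. \<alpha> \<in> AF \<Longrightarrow> \<beta> \<in> AF \<Longrightarrow> p (aconv \<alpha> \<beta>) \<le> p \<alpha> * p \<beta>"
    using sm unfolding submultiplicative_OS_def by auto
  have p0: "p (\<lambda>u. 0) = 0" using hom[OF tau_AF[of 0], of 0] by simp
  have pnn: "p \<alpha> \<ge> 0" if a: "\<alpha> \<in> AF" for \<alpha>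
  proof -
    have "p (\<lambda>u. \<alpha> u + (-1) * \<alpha> u) \<le> p \<alpha> + p (\<lambda>u. (-1) * \<alpha> u)"
      by (rule tri[OF a AF_cmultI[OF a]])
    then have "0 \<le> p \<alpha> + p \<alpha>" using hom[OF a, of "-1"] p0 by simp
    then show ?thesis by simp
  qed
  define C where "C = p (tau 1)"
  define M where "M = max 1 (p (tau 0))"
  have C0: "C \<ge> 0" unfolding C_def by (rule pnn[OF tau_AF])
  have M0: "M > 0" unfolding M_def by simp
  have ptau: "p (tau k) \<le> M * C ^ k" for k
  proof (induction k)
    case 0
    then show ?case by (simp add: M_def)
  next
    case (Suc k)
    have "p (tau (Suc k)) = p (aconv (tau 1) (tau k))" by (simp only: aconv_tau)
    also have "\<dots> \<le> C * p (tau k)" unfolding C_def by (rule smul[OF tau_AF tau_AF])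
    also have "\<dots> \<le> C * (M * C ^ k)" using Suc C0 by (rule mult_left_mono)
    also have "\<dots> = M * C ^ Suc k" by simp
    finally show ?case .
  qed
  have psum: "p (\<lambda>u. \<Sum>k<n. a k * tau k u) \<le> (\<Sum>k<n. norm (a k) * p (tau k))" for a n
  proof (induction n)
    case 0
    then show ?case using p0 by simp
  next
    case (Suc n)
    have "p (\<lambda>u. \<Sum>k<Suc n. a k * tau k u) = p (\<lambda>u. (\<Sum>k<n. a k * tau k u) + a n * tau n u)" by simp
    also have "\<dots> \<le> p (\<lambda>u. \<Sum>k<n. a k * tau k u) + p (\<lambda>u. a n * tau n u)"
      by (rule tri[OF AF_psum AF_cmultI[OF tau_AF]])
    also have "\<dots> \<le> (\<Sum>k<n. norm (a k) * p (tau k)) + norm (a n) * p (tau n)"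
      using Suc hom[OF tau_AF] by simp
    finally show ?case by simp
  qed
  have "\<forall>\<alpha>\<in>AF. p \<alpha> \<le> M * normC C \<alpha>"
  proof
    fix \<alpha> assume a: "\<alpha> \<in> AF"
    show "p \<alpha> \<le> M * normC C \<alpha>"
    proof (rule field_le_epsilon)
      fix \<epsilon> :: real assume \<epsilon>: "\<epsilon> > 0"
      have cm: "continuous_map (subtopology (unif_family_topology {B. compactin OC_top B}) AF) euclidean p"
        using ct by (simp add: continuous_OS_def OS_top_def)
      obtain B e where Be: "B \<in> {B. compactin OC_top B}" "e > 0"
        "\<forall>g\<in>AF. (\<forall>x\<in>B. dist (g x) (\<alpha> x) < e) \<longrightarrow> dist (p g) (p \<alpha>) < \<epsilon>"
        using uft_cont_elim[OF ufam_compactin cm a \<epsilon>] by blast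
      have cB: "compactin OC_top B" using Be(1) by simp
      obtain n where n: "\<forall>u\<in>B. norm (\<alpha> u - (\<Sum>k<n. acoeff \<alpha> k * tau k u)) < e"
        using approx[OF a cB Be(2)] by blast
      define s where "s = (\<lambda>u. \<Sum>k<n. acoeff \<alpha> k * tau k u)"
      have sA: "s \<in> AF" unfolding s_def by (rule AF_psum)
      have "\<forall>x\<in>B. dist (s x) (\<alpha> x) < e" using n by (simp add: s_def dist_norm norm_minus_commute)
      then have "dist (p s) (p \<alpha>) < \<epsilon>" using Be(3) sA by blast
      then have "p \<alpha> < p s + \<epsilon>" by (simp add: dist_real_def)
      also have "p s \<le> (\<Sum>k<n. norm (acoeff \<alpha> k) * p (tau k))" unfolding s_def by (rule psum)
      also have "\<dots> \<le> (\<Sum>k<n. norm (acoeff \<alpha> k) * (M * C ^ k))"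
        by (intro sum_mono mult_left_mono ptau) auto
      also have "\<dots> = M * (\<Sum>k<n. norm (acoeff \<alpha> k) * C ^ k)"
        by (simp add: sum_distrib_left mult_ac)
      also have "\<dots> \<le> M * normC C \<alpha>"
        unfolding normC_def using M0 C0
        by (intro mult_left_mono sum_le_suminf AF_summable[OF a]) auto
      finally show "p \<alpha> \<le> M * normC C \<alpha> + \<epsilon>" by simp
    qed
  qed
  then show ?thesis using C0 M0 by blast
qed

theorem mainTheorem14:
  shows "(\<forall>C::real. C \<ge> 0 \<longrightarrow>
            is_seminorm_OS (normC C) \<and> continuous_OS (normC C) \<and> submultiplicative_OS (normC C))
       \<and> (\<forall>p. is_seminorm_OS p \<and> continuous_OS p \<and> submultiplicative_OS p \<longrightarrow>
            (\<exists>C::real. C \<ge> 0 \<and> (\<exists>M::real. M > 0 \<and>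
               (\<forall>\<alpha>\<in>analytic_functionals. p \<alpha> \<le> M * normC C \<alpha>))))"
  using part1 part2 by blast


end
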